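(* Let $G$ be a finite group and $G^- = \{ g \in G : \langle g \rangle \text{ is not a maximal cyclic subgroup of } G\}$. If $G^-$ is a subgroup of $G$, then every element of $G$ has prime power order.
   Context: A cyclic subgroup $C$ of $G$ is maximal cyclic if there is no cyclic subgroup $D$ of $G$ with $C < D$. *)

theory Defs
  imports "HOL-Algebra.Algebra"
begin

definition cyclic_subgroup :: "('a, 'b) monoid_scheme \<Rightarrow> 'a set \<Rightarrow> bool" where
  "cyclic_subgroup G C \<longleftrightarrow> subgroup C G \<and> (\<exists>x \<in> carrier G. C = generate G {x})"

definition maximal_cyclic_subgroup :: "('a, 'b) monoid_scheme \<Rightarrow> 'a set \<Rightarrow> bool" where
  "maximal_cyclic_subgroup G C \<longleftrightarrow>
     cyclic_subgroup G C \<and> \<not> (\<exists>D. cyclic_subgroup G D \<and> C \<subset> D)"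

definition non_max_cyclic_elems :: "('a, 'b) monoid_scheme \<Rightarrow> 'a set" where
  "non_max_cyclic_elems G = {g \<in> carrier G. \<not> maximal_cyclic_subgroup G (generate G {g})}"

end

theory Submission
  imports Defs
begin

lemma pp_not_one:
  assumes "\<not> (\<exists>(p::nat) k. Factorial_Ring.prime p \<and> n = p ^ k)" "n \<noteq> 0"
  shows "\<exists>p m. Factorial_Ring.prime p \<and> p dvd n \<and> m dvd n \<and> m > 1 \<and> coprime p m"
proof -
  have "n \<noteq> 1" using assms(1)[simplified] by (metis power_0 two_is_prime_nat)
  then obtain p where p: "Factorial_Ring.prime p" "p dvd n" using prime_factor_nat by blast
  define k where "k = multiplicity p n"
  define m where "m = n div p ^ k"
  have d: "p ^ k dvd n" unfolding k_def by (rule multiplicity_dvd)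
  have nm: "n = p ^ k * m" using d unfolding m_def by simp
  have "\<not> p dvd m" unfolding m_def k_def
  proof -
    have "p \<noteq> Suc 0" using prime_gt_1_nat[OF p(1)] by simp
    then show "\<not> p dvd n div p ^ multiplicity p n"
      using multiplicity_decompose[of n p] assms(2) by simp
  qed
  then have cop: "coprime p m" using p(1) by (simp add: prime_imp_coprime)
  have "m \<noteq> 0" using nm assms(2) by auto
  moreover have "m \<noteq> 1" using nm assms(1) p(1) by (metis mult.right_neutral)
  ultimately have "m > 1" by simp
  moreover have "m dvd n" using nm by simp
  ultimately show ?thesis using p cop by blast
qed

lemma (in group) gen_sub_ord:
  assumes "g \<in> carrier G" "finite (carrier G)" "d dvd ord g" "d > 1"
  shows "generate G {g [^] d} \<subset> generate G {g}"
proof -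
  have gd: "g [^] d \<in> carrier G" using assms by simp
  have "g [^] d \<in> generate G {g}" using generate_pow[OF assms(1)] int_pow_int
    by (metis (mono_tags, lifting) UNIV_I mem_Collect_eq)
  then have sub: "generate G {g [^] d} \<subseteq> generate G {g}"
    by (intro generate_subgroup_incl) (auto intro: generate_is_subgroup assms)
  have o: "ord g \<ge> 1" using ord_ge_1 assms by blast
  have "ord (g [^] d) = ord g div d" using ord_pow assms by simp
  also have "\<dots> < ord g" using o assms(4) by simp
  finally have "card (generate G {g [^] d}) \<noteq> card (generate G {g})"
    using generate_pow_card gd assms(1) by (metis less_irrefl)
  then show ?thesis using sub by auto
qed

lemma (in group) cyc:
  assumes "g \<in> carrier G"
  shows "cyclic_subgroup G (generate G {g})"
  unfolding cyclic_subgroup_def using assms generate_is_subgroup by auto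

lemma (in group) key:
  assumes fin: "finite (carrier G)" and sg: "subgroup (non_max_cyclic_elems G) G"
    and g: "g \<in> carrier G"
    and np: "\<not> (\<exists>(p::nat) k. Factorial_Ring.prime p \<and> ord g = p ^ k)"
  shows "\<exists>h \<in> carrier G. ord g < ord h \<and> ord g dvd ord h"
proof -
  have o: "ord g \<noteq> 0" using ord_ge_1 fin g by fastforce
  obtain p m where pm: "Factorial_Ring.prime p" "p dvd ord g" "m dvd ord g" "m > 1" "coprime p m"
    using pp_not_one[OF np o] by blast
  have p1: "p > 1" using pm(1) prime_gt_1_nat by blast
  have inN: "g [^] d \<in> non_max_cyclic_elems G" if "d dvd ord g" "d > 1" for d
  proof -
    have "\<not> maximal_cyclic_subgroup G (generate G {g [^] d})"
      unfolding maximal_cyclic_subgroup_def using gen_sub_ord[OF g fin that] cyc[OF g] by blast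
    then show ?thesis unfolding non_max_cyclic_elems_def using g by auto
  qed
  have a: "g [^] p \<in> non_max_cyclic_elems G" using inN pm p1 by blast
  have b: "g [^] m \<in> non_max_cyclic_elems G" using inN pm by blast
  obtain u v :: int where uv: "u * int p + v * int m = 1"
    using bezout_int[of "int p" "int m"] pm(5) by (metis coprime_int_iff coprime_iff_gcd_eq_1)
  have "g = g [^] (u * int p + v * int m)" using uv g by simp
  also have "\<dots> = (g [^] int p) [^] u \<otimes> (g [^] int m) [^] v"
    using g by (simp add: int_pow_mult int_pow_pow mult.commute)
  also have "\<dots> = (g [^] p) [^] u \<otimes> (g [^] m) [^] v" by (simp add: int_pow_int)
  finally have gN: "g \<in> non_max_cyclic_elems G"
    using a b sg subgroup_int_pow_closed subgroup.m_closed by metis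
  then have "\<not> maximal_cyclic_subgroup G (generate G {g})"
    unfolding non_max_cyclic_elems_def by auto
  then obtain D where D: "cyclic_subgroup G D" "generate G {g} \<subset> D"
    unfolding maximal_cyclic_subgroup_def using cyc[OF g] by blast
  then obtain h where h: "h \<in> carrier G" "D = generate G {h}"
    unfolding cyclic_subgroup_def by blast
  have "finite D" using D(1) fin unfolding cyclic_subgroup_def
    using subgroup.subset finite_subset by blast
  then have "card (generate G {g}) < card D" using D(2) psubset_card_mono by blast
  then have lt: "ord g < ord h" using generate_pow_card g h by metis
  have "g \<in> generate G {g}" by (rule generate.incl) simp
  then have "g \<in> generate G {h}" using D h by auto
  then obtain i :: int where i: "g = h [^] i" using generate_pow[OF h(1)] by blast
  have "g [^] ord h = \<one>"
  proof -
    have "g [^] ord h = g [^] int (ord h)" by (simp add: int_pow_int)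
    also have "\<dots> = h [^] (i * int (ord h))" using i h int_pow_pow by simp
    also have "\<dots> = (h [^] int (ord h)) [^] i" using h int_pow_pow by (simp add: mult.commute)
    also have "\<dots> = \<one>" using h by (simp add: int_pow_int)
    finally show ?thesis .
  qed
  then have "ord g dvd ord h" using pow_eq_id g by blast
  then show ?thesis using lt h by blast
qed

theorem lemma3p3:
  fixes G :: "('a, 'b) monoid_scheme"
  assumes "group G" and "finite (carrier G)"
    and "subgroup (non_max_cyclic_elems G) G"
  shows "\<forall>g \<in> carrier G. \<exists>(p::nat) k. Factorial_Ring.prime p \<and> group.ord G g = p ^ k"
proof (rule ccontr)
  interpret group G by fact
  assume "\<not> ?thesis"
  then obtain g0 where g0: "g0 \<in> carrier G" "\<not> (\<exists>(p::nat) k. Factorial_Ring.prime p \<and> ord g0 = p ^ k)"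
    by blast
  have "\<forall>g. g \<in> carrier G \<longrightarrow> order G - ord g = n \<longrightarrow> (\<exists>(p::nat) k. Factorial_Ring.prime p \<and> ord g = p ^ k)" for n
  proof (induction n rule: less_induct)
    case (less n)
    show ?case
    proof (intro allI impI)
      fix g assume g: "g \<in> carrier G" "order G - ord g = n"
      show "\<exists>(p::nat) k. Factorial_Ring.prime p \<and> ord g = p ^ k"
      proof (rule ccontr)
        assume np: "\<not> ?thesis"
        obtain h where h: "h \<in> carrier G" "ord g < ord h" "ord g dvd ord h"
          using key[OF assms(2,3) g(1) np] by blast
        have "ord h \<le> order G" using ord_le_group_order assms(2) h(1) by blast
        then have "order G - ord h < n" using g h by linarith
        then obtain p k where pk: "Factorial_Ring.prime p" "ord h = p ^ k"
          using less h(1) by blast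
        then obtain i where "ord g = p ^ i" using h(3) divides_primepow_nat by metis
        then show False using np pk by blast
      qed
    qed
  qed
  then show False using g0 by blast
qed

end
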